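(* Suppose $a\colon\mathbb{N}\to\mathbb{C}$ has the property that for each $N\in\mathbb{N}$ there exist infinitely many $m\in\mathbb{N}$ such that $|a(m)|>N|a(m+j)|$ for every $j\in\mathbb{Z}$ with $1\le|j|\le N$. Then the power series $\sum_{n\ge0}a(n)x^n\in\mathbb{C}((x))$ does not satisfy any non-trivial (linear) differential equation $\sum_{i=0}^d q_i f^{(i)}=0$ with coefficients $q_i\in\mathbb{C}(x)$ not all zero, and hence is transcendental over $\mathbb{C}(x)$.
   Context: $\mathbb{C}((x))$ is the field of formal Laurent series in $x$ with complex coefficients, with the usual formal derivation $d/dx$; $f^{(i)}$ denotes the $i$-th derivative. *)

theory Defs
  imports "HOL-Computational_Algebra.Formal_Laurent_Series" "HOL-Computational_Algebra.Polynomial_FPS"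
begin

text \<open>The subfield C(x) of rational functions inside C((x)), via Laurent expansion at 0.\<close>
definition rat_funs :: "complex fls set" where
  "rat_funs = {fps_to_fls (fps_of_poly p) / fps_to_fls (fps_of_poly r) | p r. r \<noteq> 0}"

definition differentially_finite :: "complex fls \<Rightarrow> bool" where
  "differentially_finite f \<longleftrightarrow>
     (\<exists>d q. (\<forall>i\<le>d. q i \<in> rat_funs) \<and> (\<exists>i\<le>d. q i \<noteq> 0) \<and>
            (\<Sum>i\<le>d. q i * (fls_deriv ^^ i) f) = 0)"

definition algebraic_over_rat_funs :: "complex fls \<Rightarrow> bool" where
  "algebraic_over_rat_funs f \<longleftrightarrow>
     (\<exists>d c. (\<forall>i\<le>d. c i \<in> rat_funs) \<and> (\<exists>i\<le>d. c i \<noteq> 0) \<and>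
            (\<Sum>i\<le>d. c i * f ^ i) = 0)"

end

theory Submission
  imports Defs
begin

abbreviation E :: "complex poly \<Rightarrow> complex fls" where
  "E p \<equiv> fps_to_fls (fps_of_poly p)"

lemma E_add: "E (p + q) = E p + E q" by (simp add: fps_of_poly_add)
lemma E_mult: "E (p * q) = E p * E q" by (simp add: fps_of_poly_mult fls_times_fps_to_fls)
lemma E_uminus: "E (- p) = - E p" by (simp add: fps_of_poly_uminus)
lemma E_eq0: "E p = 0 \<longleftrightarrow> p = 0"
  by (metis fps_of_poly_0 fps_of_poly_eq_iff fps_to_fls_eq_0_iff)
lemma E_prod: "E (prod f A) = (\<Prod>x\<in>A. E (f x))"
  by (induction A rule: infinite_finite_induct) (auto simp: E_mult)

lemma rat_funsI: "r \<noteq> 0 \<Longrightarrow> E p / E r \<in> rat_funs"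
  unfolding rat_funs_def by blast

lemma rat_funsE: assumes "x \<in> rat_funs" obtains p r where "r \<noteq> 0" "x = E p / E r"
  using assms unfolding rat_funs_def by blast

lemma rat_funs_E: "E p \<in> rat_funs"
  using rat_funsI[of 1 p] by simp

lemma rat_funs_0: "0 \<in> rat_funs" using rat_funs_E[of 0] by simp
lemma rat_funs_1: "1 \<in> rat_funs" using rat_funs_E[of 1] by simp

lemma rat_funs_add: assumes "x \<in> rat_funs" "y \<in> rat_funs" shows "x + y \<in> rat_funs"
proof -
  obtain p r where pr: "r \<noteq> 0" "x = E p / E r" using assms(1) by (rule rat_funsE)
  obtain p' r' where pr': "r' \<noteq> 0" "y = E p' / E r'" using assms(2) by (rule rat_funsE)
  have nz: "E r \<noteq> 0" "E r' \<noteq> 0" using pr pr' by (auto simp: E_eq0)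
  have "x + y = E (p * r' + p' * r) / E (r * r')"
    unfolding pr(2) pr'(2) using nz by (simp add: E_add E_mult field_simps)
  thus ?thesis using pr pr' by (simp add: rat_funsI)
qed

lemma rat_funs_mult: assumes "x \<in> rat_funs" "y \<in> rat_funs" shows "x * y \<in> rat_funs"
proof -
  obtain p r where pr: "r \<noteq> 0" "x = E p / E r" using assms(1) by (rule rat_funsE)
  obtain p' r' where pr': "r' \<noteq> 0" "y = E p' / E r'" using assms(2) by (rule rat_funsE)
  have nz: "E r \<noteq> 0" "E r' \<noteq> 0" using pr pr' by (auto simp: E_eq0)
  have "x * y = E (p * p') / E (r * r')"
    unfolding pr(2) pr'(2) using nz by (simp add: E_add E_mult field_simps)
  thus ?thesis using pr pr' by (simp add: rat_funsI)
qed

lemma rat_funs_uminus: assumes "x \<in> rat_funs" shows "- x \<in> rat_funs"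
proof -
  have "- x = E (-1) * x" by (simp add: E_uminus)
  thus ?thesis using rat_funs_mult[OF rat_funs_E assms] by simp
qed

lemma rat_funs_diff: "x \<in> rat_funs \<Longrightarrow> y \<in> rat_funs \<Longrightarrow> x - y \<in> rat_funs"
  using rat_funs_add[of x "-y"] rat_funs_uminus[of y] by simp

lemma rat_funs_divide: assumes "x \<in> rat_funs" "y \<in> rat_funs" shows "x / y \<in> rat_funs"
proof -
  obtain p r where pr: "r \<noteq> 0" "x = E p / E r" using assms(1) by (rule rat_funsE)
  obtain p' r' where pr': "r' \<noteq> 0" "y = E p' / E r'" using assms(2) by (rule rat_funsE)
  show ?thesis
  proof (cases "p' = 0")
    case True then show ?thesis using pr' by (simp add: rat_funs_0)
  next
    case False
    have nz: "E r \<noteq> 0" "E r' \<noteq> 0" "E p' \<noteq> 0" using pr pr' False by (auto simp: E_eq0)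
    have "x / y = E (p * r') / E (r * p')"
      unfolding pr(2) pr'(2) using nz by (simp add: E_add E_mult field_simps)
    thus ?thesis using pr pr' False by (simp add: rat_funsI)
  qed
qed

lemma rat_funs_sum: "(\<And>x. x \<in> A \<Longrightarrow> f x \<in> rat_funs) \<Longrightarrow> sum f A \<in> rat_funs"
  by (induction A rule: infinite_finite_induct) (auto simp: rat_funs_0 rat_funs_add)

lemma clear_denoms:
  fixes d :: nat
  assumes "\<forall>i\<le>d. q i \<in> rat_funs"
  shows "\<exists>R p. R \<noteq> 0 \<and> (\<forall>i\<le>d. E (p i) = E R * q i)"
proof -
  have "\<forall>i\<in>{..d}. \<exists>pr. snd pr \<noteq> 0 \<and> q i = E (fst pr) / E (snd pr)"
  proof
    fix i assume "i \<in> {..d}"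
    then obtain p r where "r \<noteq> 0" "q i = E p / E r" using assms by (auto elim!: rat_funsE)
    then show "\<exists>pr. snd pr \<noteq> 0 \<and> q i = E (fst pr) / E (snd pr)" by (intro exI[of _ "(p,r)"]) auto
  qed
  then obtain pr where pr: "\<forall>i\<in>{..d}. snd (pr i) \<noteq> 0 \<and> q i = E (fst (pr i)) / E (snd (pr i))"
    by metis
  define R where "R = (\<Prod>j\<le>d. snd (pr j))"
  define p where "p i = fst (pr i) * (\<Prod>j\<in>{..d}-{i}. snd (pr j))" for i
  have "R \<noteq> 0" unfolding R_def using pr by auto
  moreover have "E (p i) = E R * q i" if "i \<le> d" for i
  proof -
    have "R = snd (pr i) * (\<Prod>j\<in>{..d}-{i}. snd (pr j))"
      unfolding R_def using that by (simp add: prod.remove)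
    thus ?thesis using pr that unfolding p_def by (simp add: E_mult E_eq0 field_simps)
  qed
  ultimately show ?thesis by blast
qed

lemma lin_dep:
  fixes w v :: "nat \<Rightarrow> complex fls"
  assumes "finite I" "card I > d"
    "\<forall>i\<in>I. \<exists>r. (\<forall>k<d. r k \<in> rat_funs) \<and> v i = (\<Sum>k<d. r k * w k)"
  shows "\<exists>q. (\<forall>i\<in>I. q i \<in> rat_funs) \<and> (\<exists>i\<in>I. q i \<noteq> 0) \<and> (\<Sum>i\<in>I. q i * v i) = 0"
  using assms
proof (induction d arbitrary: I v)
  case 0
  then have "I \<noteq> {}" by auto
  then show ?case using 0 by (intro exI[of _ "\<lambda>_. 1"]) (auto simp: rat_funs_1)
next
  case (Suc d)
  from Suc.prems(3) obtain r where r: "\<forall>i\<in>I. (\<forall>k<Suc d. r i k \<in> rat_funs) \<and> v i = (\<Sum>k<Suc d. r i k * w k)"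
    by metis
  show ?case
  proof (cases "\<forall>i\<in>I. r i d = 0")
    case True
    have "\<forall>i\<in>I. \<exists>r. (\<forall>k<d. r k \<in> rat_funs) \<and> v i = (\<Sum>k<d. r k * w k)"
      using r True by (auto intro!: exI[of _ "r _"])
    then show ?thesis using Suc.IH[of I v] Suc.prems by auto
  next
    case False
    then obtain i0 where i0: "i0 \<in> I" "r i0 d \<noteq> 0" by auto
    define I' where "I' = I - {i0}"
    define v' where "v' i = v i - (r i d / r i0 d) * v i0" for i
    have cI': "card I' > d" "finite I'" using Suc.prems i0 unfolding I'_def by auto
    have "\<forall>i\<in>I'. \<exists>r. (\<forall>k<d. r k \<in> rat_funs) \<and> v' i = (\<Sum>k<d. r k * w k)"
    proof
      fix i assume i: "i \<in> I'"
      hence iI: "i \<in> I" unfolding I'_def by auto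
      let ?r = "\<lambda>k. r i k - (r i d / r i0 d) * r i0 k"
      have "v' i = (\<Sum>k<Suc d. ?r k * w k)"
        unfolding v'_def using r iI i0 by (simp add: sum_distrib_left sum_subtractf algebra_simps)
      also have "\<dots> = (\<Sum>k<d. ?r k * w k)" using i0 by simp
      finally show "\<exists>r. (\<forall>k<d. r k \<in> rat_funs) \<and> v' i = (\<Sum>k<d. r k * w k)"
        using r iI i0 by (intro exI[of _ ?r]) (auto intro!: rat_funs_diff rat_funs_mult rat_funs_divide)
    qed
    from Suc.IH[OF cI'(2) cI'(1) this] obtain q' where
      q': "\<forall>i\<in>I'. q' i \<in> rat_funs" "\<exists>i\<in>I'. q' i \<noteq> 0" "(\<Sum>i\<in>I'. q' i * v' i) = 0" by blast
    define q where "q i = (if i = i0 then - (\<Sum>j\<in>I'. q' j * (r j d / r i0 d)) else q' i)" for i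
    have "(\<Sum>i\<in>I. q i * v i) = q i0 * v i0 + (\<Sum>i\<in>I'. q i * v i)"
      unfolding I'_def using i0 Suc.prems(1) by (simp add: sum.remove)
    also have "(\<Sum>i\<in>I'. q i * v i) = (\<Sum>i\<in>I'. q' i * v i)"
      unfolding q_def I'_def by (intro sum.cong) auto
    also have "q i0 * v i0 + (\<Sum>i\<in>I'. q' i * v i) = (\<Sum>i\<in>I'. q' i * v' i)"
    proof -
      have "q i0 * v i0 = - (\<Sum>i\<in>I'. q' i * (r i d / r i0 d) * v i0)"
        unfolding q_def by (simp add: sum_distrib_right)
      moreover have "(\<Sum>i\<in>I'. q' i * v' i) = (\<Sum>i\<in>I'. q' i * v i) - (\<Sum>i\<in>I'. q' i * (r i d / r i0 d) * v i0)"
        unfolding v'_def by (simp add: sum_subtractf algebra_simps)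
      ultimately show ?thesis by simp
    qed
    finally have "(\<Sum>i\<in>I. q i * v i) = 0" using q' by simp
    moreover have "\<forall>i\<in>I. q i \<in> rat_funs"
      using q' r i0 unfolding q_def I'_def
      by (auto intro!: rat_funs_uminus rat_funs_sum rat_funs_mult rat_funs_divide)
    moreover have "\<exists>i\<in>I. q i \<noteq> 0" using q' unfolding q_def I'_def by auto
    ultimately show ?thesis by blast
  qed
qed


inductive_set polyring :: "complex fls \<Rightarrow> complex fls set" for f where
  pr_E: "E p \<in> polyring f"
| pr_f: "f \<in> polyring f"
| pr_add: "u \<in> polyring f \<Longrightarrow> v \<in> polyring f \<Longrightarrow> u + v \<in> polyring f"
| pr_mult: "u \<in> polyring f \<Longrightarrow> v \<in> polyring f \<Longrightarrow> u * v \<in> polyring f"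

lemma pr_0: "0 \<in> polyring f" using pr_E[of 0] by simp
lemma pr_1: "1 \<in> polyring f" using pr_E[of 1] by simp
lemma pr_uminus: "u \<in> polyring f \<Longrightarrow> - u \<in> polyring f"
  using pr_mult[OF pr_E[of "-1"]] by (simp add: E_uminus)
lemma pr_diff: "u \<in> polyring f \<Longrightarrow> v \<in> polyring f \<Longrightarrow> u - v \<in> polyring f"
  using pr_add[OF _ pr_uminus] by (metis diff_conv_add_uminus)
lemma pr_of_nat: "of_nat n \<in> polyring f"
proof -
  have "E (of_nat n) = of_nat n" by (induction n) (auto simp: E_add)
  thus ?thesis using pr_E by metis
qed
lemma pr_power: "u \<in> polyring f \<Longrightarrow> u ^ n \<in> polyring f"
  by (induction n) (auto intro: pr_mult pr_1)
lemma pr_sum: "(\<And>x. x \<in> A \<Longrightarrow> g x \<in> polyring f) \<Longrightarrow> sum g A \<in> polyring f"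
  by (induction A rule: infinite_finite_induct) (auto intro: pr_add pr_0)

lemma E_deriv: "fls_deriv (E p) = E (pderiv p)"
  by (simp add: fls_deriv_fps_to_fls fps_of_poly_pderiv)

lemma pr_deriv:
  assumes Q: "Q \<in> polyring f" and Qf: "Q * fls_deriv f \<in> polyring f"
  shows "u \<in> polyring f \<Longrightarrow> Q * fls_deriv u \<in> polyring f"
proof (induction u rule: polyring.induct)
  case (pr_E p) then show ?case using Q by (simp add: E_deriv pr_mult polyring.pr_E)
next
  case pr_f then show ?case using Qf .
next
  case (pr_add u v) then show ?case by (simp add: distrib_left polyring.pr_add)
next
  case (pr_mult u v)
  have "Q * fls_deriv (u * v) = u * (Q * fls_deriv v) + (Q * fls_deriv u) * v"
    by (simp add: algebra_simps)
  then show ?case using pr_mult by (simp add: polyring.pr_add polyring.pr_mult)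
qed


lemma E_of_nat: "E (of_nat n) = of_nat n" by (induction n) (auto simp: E_add)
lemma smult_of_nat: "smult (of_nat n) p = of_nat n * p"
  by (induction n) (auto simp: algebra_simps smult_add_left)
lemma E_smult_of_nat: "E (smult (of_nat n) p) = of_nat n * E p"
  by (simp add: smult_of_nat E_mult E_of_nat)

lemma alg_imp_dfin:
  assumes "algebraic_over_rat_funs f"
  shows "differentially_finite f"
proof -
  from assms obtain d c where c: "\<forall>i\<le>d. c i \<in> rat_funs" "\<exists>i\<le>d. c i \<noteq> 0" "(\<Sum>i\<le>d. c i * f^i) = 0"
    unfolding algebraic_over_rat_funs_def by blast
  from clear_denoms[OF c(1)] obtain R p where Rp: "R \<noteq> 0" "\<forall>i\<le>d. E (p i) = E R * c i" by blast
  have ex: "\<exists>n p. p n \<noteq> 0 \<and> (\<Sum>k\<le>n. E (p k) * f^k) = 0"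
  proof -
    have s0: "(\<Sum>k\<le>d. E (p k) * f^k) = E R * (\<Sum>k\<le>d. c k * f^k)"
      using Rp by (simp add: sum_distrib_left mult.assoc)
    have nzE: "E R \<noteq> 0" using Rp by (simp add: E_eq0)
    let ?Z = "{i. i \<le> d \<and> p i \<noteq> 0}"
    obtain i where i: "i \<le> d" "c i \<noteq> 0" using c(2) by blast
    have "E (p i) \<noteq> 0" using Rp i nzE by simp
    hence Zne: "?Z \<noteq> {}" using i by (auto simp: E_eq0)
    have Zf: "finite ?Z" by simp
    define n where "n = Max ?Z"
    have n: "n \<le> d" "p n \<noteq> 0" using Max_in[OF Zf Zne] unfolding n_def by auto
    have above: "p k = 0" if "n < k" "k \<le> d" for k
    proof (rule ccontr)
      assume "p k \<noteq> 0"
      hence "k \<le> n" using Max_ge[OF Zf, of k] that unfolding n_def by auto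
      thus False using that by simp
    qed
    have "(\<Sum>k\<le>d. E (p k) * f^k) = (\<Sum>k\<le>n. E (p k) * f^k)"
      using n above by (intro sum.mono_neutral_right) auto
    with s0 c(3) n show ?thesis by auto
  qed
  define m where "m = (LEAST n. \<exists>p. p n \<noteq> 0 \<and> (\<Sum>k\<le>n. E (p k) * f^k) = 0)"
  obtain p where rel: "p m \<noteq> 0" "(\<Sum>k\<le>m. E (p k) * f^k) = 0"
    using LeastI_ex[OF ex] unfolding m_def by blast
  have minimal: "(\<Sum>k\<le>n. E (p' k) * f^k) \<noteq> 0" if "n < m" "p' n \<noteq> 0" for n p'
    using not_less_Least[of n "\<lambda>n. \<exists>p. p n \<noteq> 0 \<and> (\<Sum>k\<le>n. E (p k) * f^k) = 0"] that
    unfolding m_def by blast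
  have "m \<noteq> 0"
  proof
    assume "m = 0" with rel show False by (simp add: E_eq0)
  qed
  then obtain m' where m': "m = Suc m'" by (cases m) auto
  define Q where "Q = (\<Sum>k<m. E (smult (of_nat (Suc k)) (p (Suc k))) * f^k)"
  have Qnz: "Q \<noteq> 0"
  proof
    assume "Q = 0"
    hence "(\<Sum>k\<le>m'. E (smult (of_nat (Suc k)) (p (Suc k))) * f^k) = 0"
      unfolding Q_def m' lessThan_Suc_atMost .
    moreover have "smult (of_nat (Suc m')) (p (Suc m')) \<noteq> 0" using rel(1) m' by (simp del: of_nat_Suc)
    ultimately show False using minimal[of m' "\<lambda>k. smult (of_nat (Suc k)) (p (Suc k))"] m' by auto
  qed
  have Qpr: "Q \<in> polyring f" unfolding Q_def
    by (intro pr_sum pr_mult pr_E pr_power pr_f)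
  define P1 where "P1 = (\<Sum>k\<le>m. E (pderiv (p k)) * f^k)"
  have P1pr: "P1 \<in> polyring f" unfolding P1_def
    by (intro pr_sum pr_mult pr_E pr_power pr_f)
  have "0 = fls_deriv (\<Sum>k\<le>m. E (p k) * f^k)" using rel by simp
  also have "\<dots> = (\<Sum>k\<le>m. of_nat k * E (p k) * f^(k-1)) * fls_deriv f + P1"
    unfolding P1_def fls_deriv_sum
    by (simp add: fls_deriv_power E_deriv sum.distrib sum_distrib_right sum_distrib_left algebra_simps)
  also have "(\<Sum>k\<le>m. of_nat k * E (p k) * f^(k-1)) = Q"
    unfolding Q_def m' sum.atMost_Suc_shift lessThan_Suc_atMost
    by (simp add: E_smult_of_nat del: of_nat_Suc)
  finally have Qf: "Q * fls_deriv f = - P1" by (simp add: eq_neg_iff_add_eq_0)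
  have Qfpr: "Q * fls_deriv f \<in> polyring f" unfolding Qf by (rule pr_uminus[OF P1pr])
  note DQ = pr_deriv[OF Qpr Qfpr]
  have g: "Q^(2*i+1) * (fls_deriv^^(Suc i)) f \<in> polyring f" for i
  proof (induction i)
    case 0 then show ?case using Qfpr by simp
  next
    case (Suc i)
    define X where "X = (fls_deriv^^(Suc i)) f"
    define G where "G = Q^(2*i+1) * X"
    have G: "G \<in> polyring f" using Suc unfolding G_def X_def .
    have dG: "fls_deriv G = of_nat (2*i+1) * Q^(2*i) * fls_deriv Q * X + Q^(2*i+1) * fls_deriv X"
    proof -
      have "fls_deriv (Q^(2*i+1)) = of_nat (2*i+1) * Q^(2*i) * fls_deriv Q"
        using fls_deriv_power[of Q "2*i+1"] by simp
      thus ?thesis unfolding G_def by (simp add: algebra_simps)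
    qed
    have XX: "(fls_deriv^^(Suc (Suc i))) f = fls_deriv X" unfolding X_def by simp
    have "Q^(2*Suc i+1) * (fls_deriv^^(Suc (Suc i))) f = Q * (Q * fls_deriv G) - of_nat (2*i+1) * (Q * fls_deriv Q) * G"
      unfolding XX dG unfolding G_def by (simp add: algebra_simps power_Suc)
    also have "\<dots> \<in> polyring f"
      by (intro pr_diff pr_mult Qpr DQ G pr_of_nat)
    finally show ?case .
  qed
  have h: "Q^(2*m) * (fls_deriv^^i) f \<in> polyring f" if "i \<le> m" for i
  proof (cases i)
    case 0 then show ?thesis by (simp add: pr_mult pr_power Qpr pr_f)
  next
    case (Suc j)
    have "Q^(2*m) = Q^(2*m - (2*j+1)) * Q^(2*j+1)"
    proof -
      have "2*m = (2*m - (2*j+1)) + (2*j+1)" using that Suc by simp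
      hence "Q^(2*m) = Q^((2*m - (2*j+1)) + (2*j+1))" by (rule arg_cong)
      thus ?thesis by (simp only: power_add)
    qed
    then show ?thesis using g[of j] Suc by (simp add: mult.assoc pr_mult pr_power Qpr)
  qed
  define B where "B = {v. \<exists>r. (\<forall>k<m. r k \<in> rat_funs) \<and> v = (\<Sum>k<m. r k * f^k)}"
  have B_add: "u + v \<in> B" if uvB: "u \<in> B" "v \<in> B" for u v
  proof -
    obtain r where r: "\<forall>k<m. r k \<in> rat_funs" "u = (\<Sum>k<m. r k * f^k)" using uvB(1) unfolding B_def by blast
    obtain r' where r': "\<forall>k<m. r' k \<in> rat_funs" "v = (\<Sum>k<m. r' k * f^k)" using uvB(2) unfolding B_def by blast
    show ?thesis unfolding B_def using r r'
      by (intro CollectI exI[of _ "\<lambda>k. r k + r' k"]) (auto simp: rat_funs_add sum.distrib algebra_simps)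
  qed
  have B_scale: "c * v \<in> B" if uvB: "c \<in> rat_funs" "v \<in> B" for c v
  proof -
    obtain r where r: "\<forall>k<m. r k \<in> rat_funs" "v = (\<Sum>k<m. r k * f^k)" using uvB(2) unfolding B_def by blast
    show ?thesis unfolding B_def using r uvB(1)
      by (intro CollectI exI[of _ "\<lambda>k. c * r k"]) (auto simp: rat_funs_mult sum_distrib_left mult.assoc)
  qed
  have B_0: "0 \<in> B" unfolding B_def by (intro CollectI exI[of _ "\<lambda>k. 0"]) (auto simp: rat_funs_0)
  have B_sum: "(\<And>x. x \<in> A \<Longrightarrow> g x \<in> B) \<Longrightarrow> sum g A \<in> B" for g and A :: "nat set"
    by (induction A rule: infinite_finite_induct) (auto intro: B_add B_0)
  have B_1: "1 \<in> B"
  proof -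
    have "(\<Sum>k<m. (if k = 0 then 1 else 0) * f^k) = (\<Sum>k<m. if k = 0 then 1 else 0)"
      by (intro sum.cong) auto
    also have "\<dots> = 1" using m' by simp
    finally show ?thesis unfolding B_def
      by (intro CollectI exI[of _ "\<lambda>k. if k = 0 then 1 else 0"]) (auto simp: rat_funs_0 rat_funs_1)
  qed
  have Epm: "E (p m) \<noteq> 0" using rel(1) by (simp add: E_eq0)
  have fm: "f^m = (\<Sum>k<m. (- E (p k) / E (p m)) * f^k)"
  proof -
    have "(\<Sum>k<m. E (p k) * f^k) + E (p m) * f^m = 0"
      using rel(2) by (simp add: lessThan_Suc_atMost[symmetric] m')
    hence "f^m = - (\<Sum>k<m. E (p k) * f^k) / E (p m)" using Epm by (simp add: field_simps eq_neg_iff_add_eq_0)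
    thus ?thesis by (simp add: sum_divide_distrib sum_negf)
  qed
  have B_f: "f * v \<in> B" if uvB: "v \<in> B" for v
  proof -
    obtain r where r: "\<forall>k<m. r k \<in> rat_funs" "v = (\<Sum>k<m. r k * f^k)" using uvB unfolding B_def by blast
    define s where "s k = (if k = 0 then 0 else r (k - 1))" for k
    have "f * v = (\<Sum>k<m'. r k * f^(Suc k)) + r m' * f^m"
      unfolding r(2) m' by (simp add: sum_distrib_left algebra_simps)
    also have "(\<Sum>k<m'. r k * f^(Suc k)) = (\<Sum>k<m. s k * f^k)"
      unfolding m' sum.lessThan_Suc_shift s_def by simp
    also have "r m' * f^m = (\<Sum>k<m. (r m' * (- E (p k) / E (p m))) * f^k)"
      unfolding fm by (simp add: sum_distrib_left mult.assoc)
    finally have "f * v = (\<Sum>k<m. s k * f^k) + (\<Sum>k<m. (r m' * (- E (p k) / E (p m))) * f^k)" .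
    also have "\<dots> = (\<Sum>k<m. (s k + r m' * (- E (p k) / E (p m))) * f^k)"
      by (simp only: sum.distrib[symmetric] distrib_right)
    finally have "f * v = (\<Sum>k<m. (s k + r m' * (- E (p k) / E (p m))) * f^k)" .
    moreover have "\<forall>k<m. s k + r m' * (- E (p k) / E (p m)) \<in> rat_funs"
    proof -
      have sR: "s k \<in> rat_funs" if "k < m" for k using r(1) that unfolding s_def by (auto simp: rat_funs_0)
      have "r m' \<in> rat_funs" using r(1) m' by auto
      have "s k + r m' * (- E (p k) / E (p m)) \<in> rat_funs" if "k < m" for k
        using rat_funs_add[OF sR[OF that] rat_funs_mult[OF \<open>r m' \<in> rat_funs\<close> rat_funs_divide[OF rat_funs_uminus[OF rat_funs_E] rat_funs_E]]] .
      then show ?thesis by blast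
    qed
    ultimately show ?thesis unfolding B_def
      by (intro CollectI exI[of _ "\<lambda>k. s k + r m' * (- E (p k) / E (p m))"]) simp
  qed
  have B_pow: "f^k * v \<in> B" if "v \<in> B" for k v
    using that by (induction k) (auto simp: mult.assoc intro: B_f)
  have B_mult: "u * v \<in> B" if uvB: "u \<in> B" "v \<in> B" for u v
  proof -
    obtain r where r: "\<forall>k<m. r k \<in> rat_funs" "u = (\<Sum>k<m. r k * f^k)" using uvB(1) unfolding B_def by blast
    have "u * v = (\<Sum>k<m. r k * (f^k * v))" unfolding r(2) by (simp add: sum_distrib_right mult.assoc)
    also have "\<dots> \<in> B" using r(1) uvB(2) by (intro B_sum B_scale B_pow) auto
    finally show ?thesis .
  qed
  have prB: "u \<in> B" if "u \<in> polyring f" for u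
    using that
  proof (induction u rule: polyring.induct)
    case (pr_E p) then show ?case using B_scale[OF rat_funs_E B_1] by simp
  next
    case pr_f then show ?case using B_f[OF B_1] by simp
  qed (auto intro: B_add B_mult)
  have "\<forall>i\<in>{..m}. \<exists>r. (\<forall>k<m. r k \<in> rat_funs) \<and> Q^(2*m) * (fls_deriv^^i) f = (\<Sum>k<m. r k * f^k)"
  proof
    fix i assume "i \<in> {..m}"
    then have "Q^(2*m) * (fls_deriv^^i) f \<in> B" using prB[OF h] by simp
    then show "\<exists>r. (\<forall>k<m. r k \<in> rat_funs) \<and> Q^(2*m) * (fls_deriv^^i) f = (\<Sum>k<m. r k * f^k)"
      unfolding B_def by (rule CollectD)
  qed
  from lin_dep[OF _ _ this] obtain q where
    q: "\<forall>i\<in>{..m}. q i \<in> rat_funs" "\<exists>i\<in>{..m}. q i \<noteq> 0"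
       "(\<Sum>i\<in>{..m}. q i * (Q^(2*m) * (fls_deriv^^i) f)) = 0" by auto
  have "Q^(2*m) * (\<Sum>i\<le>m. q i * (fls_deriv^^i) f) = 0"
    using q(3) by (simp add: sum_distrib_left algebra_simps)
  hence "(\<Sum>i\<le>m. q i * (fls_deriv^^i) f) = 0" using Qnz by simp
  thus ?thesis unfolding differentially_finite_def using q(1,2)
    by (intro exI[of _ m] exI[of _ q]) auto
qed


lemma poch_lim:
  "(\<lambda>n. pochhammer (of_nat (n - s + 1) :: complex) i / of_nat n ^ i) \<longlonglongrightarrow> 1"
proof -
  have ev: "eventually (\<lambda>n. (\<Prod>k<i. 1 + (of_nat (k+1) - of_nat s) / of_nat n) =
      pochhammer (of_nat (n - s + 1) :: complex) i / of_nat n ^ i) sequentially"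
    using eventually_ge_at_top[of "s+1"]
  proof eventually_elim
    case (elim n)
    have nz: "(of_nat n :: complex) \<noteq> 0" using elim by simp
    have "pochhammer (of_nat (n - s + 1) :: complex) i / of_nat n ^ i
        = (\<Prod>k<i. of_nat (n - s + 1) + of_nat k) / (\<Prod>k<i. of_nat n)"
      by (simp add: pochhammer_prod atLeast0LessThan)
    also have "\<dots> = (\<Prod>k<i. (of_nat (n - s + 1) + of_nat k) / of_nat n)"
      by (simp add: prod_dividef)
    also have "\<dots> = (\<Prod>k<i. 1 + (of_nat (k+1) - of_nat s) / of_nat n)"
    proof (intro prod.cong refl)
      fix k
      have "(of_nat (n - s + 1) :: complex) = of_nat n - of_nat s + 1" using elim by (simp add: of_nat_diff)
      thus "(of_nat (n - s + 1) + of_nat k) / of_nat n = 1 + (of_nat (k+1) - of_nat s) / (of_nat n :: complex)"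
        using nz by (simp add: field_simps)
    qed
    finally show ?case by simp
  qed
  have "(\<lambda>n. (\<Prod>k<i. 1 + (of_nat (k+1) - of_nat s) / of_nat n)) \<longlonglongrightarrow> (\<Prod>k<i. 1 + (0::complex))"
    by (intro tendsto_prod tendsto_add tendsto_const lim_const_over_n)
  then show ?thesis using Lim_transform_eventually[OF _ ev] by simp
qed

lemma poch_lim0:
  assumes "i < e"
  shows "(\<lambda>n. pochhammer (of_nat (n - s + 1) :: complex) i / of_nat n ^ e) \<longlonglongrightarrow> 0"
proof -
  have ev: "eventually (\<lambda>n. (pochhammer (of_nat (n - s + 1) :: complex) i / of_nat n ^ i) * (1 / of_nat n)^(e-i)
      = pochhammer (of_nat (n - s + 1) :: complex) i / of_nat n ^ e) sequentially"
    using eventually_ge_at_top[of "1"]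
  proof eventually_elim
    case (elim n)
    have "(of_nat n :: complex) ^ e = of_nat n ^ i * of_nat n ^ (e - i)"
      using assms by (simp flip: power_add)
    thus ?case by (simp add: power_one_over)
  qed
  have "(\<lambda>n. (pochhammer (of_nat (n - s + 1) :: complex) i / of_nat n ^ i) * (1 / of_nat n)^(e-i)) \<longlonglongrightarrow> 1 * 0^(e-i)"
    by (intro tendsto_mult tendsto_power poch_lim lim_1_over_n)
  note T = this
  have z: "(1::complex) * 0^(e-i) = 0" using assms by simp
  show ?thesis by (rule Lim_transform_eventually[OF T[unfolded z] ev])
qed


lemma key_contra:
  fixes a :: "nat \<Rightarrow> complex" and c :: "nat \<Rightarrow> nat \<Rightarrow> complex" and d S :: nat
  assumes gap: "\<forall>N::nat. infinite {m::nat. \<forall>j::int. 1 \<le> \<bar>j\<bar> \<and> \<bar>j\<bar> \<le> int N \<and> int m + j \<ge> 0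
              \<longrightarrow> cmod (a m) > real N * cmod (a (nat (int m + j)))}"
  and rel: "\<And>n. n \<ge> S \<Longrightarrow> (\<Sum>x\<in>{..d}\<times>{..S}. c (fst x) (snd x) *
              pochhammer (of_nat (n - snd x + 1)) (fst x) * a (n - snd x + fst x)) = 0"
  and nz: "\<exists>i\<le>d. \<exists>s\<le>S. c i s \<noteq> 0"
  shows False
proof -
  define Z where "Z = {i. i \<le> d \<and> (\<exists>s\<le>S. c i s \<noteq> 0)}"
  have Zf: "finite Z" unfolding Z_def by simp
  have Zne: "Z \<noteq> {}" using nz unfolding Z_def by auto
  define e where "e = Max Z"
  have "e \<in> Z" unfolding e_def using Max_in[OF Zf Zne] .
  then obtain s0 where e: "e \<le> d" "s0 \<le> S" "c e s0 \<noteq> 0" unfolding Z_def by auto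
  have above: "c i s = 0" if "i \<le> d" "s \<le> S" "e < i" for i s
  proof (rule ccontr)
    assume "c i s \<noteq> 0"
    hence "i \<in> Z" using that unfolding Z_def by auto
    hence "i \<le> e" unfolding e_def using Max_ge[OF Zf] by auto
    thus False using that by simp
  qed
  define idx where "idx = {..d} \<times> {..S}"
  have idxf: "finite idx" unfolding idx_def by simp
  define h where "h x n = c (fst x) (snd x) * pochhammer (of_nat (n - snd x + 1)) (fst x) / of_nat n ^ e" for x n
  define lim where "lim x = (if fst x = e then c (fst x) (snd x) else 0)" for x :: "nat \<times> nat"
  have hlim: "h x \<longlonglongrightarrow> lim x" if "x \<in> idx" for x
  proof -
    obtain i s where x: "x = (i, s)" by (cases x)
    have isd: "i \<le> d" "s \<le> S" using that unfolding x idx_def by auto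
    consider "i = e" | "i < e" | "e < i" by linarith
    then show ?thesis
    proof cases
      case 1
      have "(\<lambda>n. c i s * (pochhammer (of_nat (n - s + 1)) i / of_nat n ^ i)) \<longlonglongrightarrow> c i s * 1"
        by (intro tendsto_mult tendsto_const poch_lim)
      then show ?thesis unfolding h_def lim_def x using 1 by simp
    next
      case 2
      have "(\<lambda>n. c i s * (pochhammer (of_nat (n - s + 1)) i / of_nat n ^ e)) \<longlonglongrightarrow> c i s * 0"
        by (intro tendsto_mult tendsto_const poch_lim0 2)
      then show ?thesis unfolding h_def lim_def x using 2 by simp
    next
      case 3
      then show ?thesis unfolding h_def lim_def x using above[OF isd 3] by simp
    qed
  qed
  define T0 where "T0 = {x\<in>idx. int (fst x) - int (snd x) = int e - int s0}"
  have T0f: "finite T0" "T0 \<subseteq> idx" unfolding T0_def using idxf by auto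
  have e0: "(e, s0) \<in> T0" unfolding T0_def idx_def using e by auto
  have "(\<lambda>n. \<Sum>x\<in>T0. h x n) \<longlonglongrightarrow> (\<Sum>x\<in>T0. lim x)"
    using hlim T0f by (intro tendsto_sum) auto
  also have "(\<Sum>x\<in>T0. lim x) = (\<Sum>x\<in>T0. if x = (e, s0) then c e s0 else 0)"
  proof (intro sum.cong refl)
    fix x assume "x \<in> T0"
    then show "lim x = (if x = (e, s0) then c e s0 else 0)"
      unfolding T0_def lim_def by (cases x) auto
  qed
  also have "\<dots> = c e s0" using e0 T0f by simp
  finally have gl: "(\<lambda>n. \<Sum>x\<in>T0. h x n) \<longlonglongrightarrow> c e s0" .
  define L where "L = cmod (c e s0)"
  have Lpos: "L > 0" unfolding L_def using e by simp
  define M where "M = (\<Sum>x\<in>idx. cmod (lim x) + 1)"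
  have ev1: "eventually (\<lambda>n. L/2 < cmod (\<Sum>x\<in>T0. h x n)) sequentially"
    using order_tendstoD(1)[OF tendsto_norm[OF gl], of "L/2"] Lpos unfolding L_def by simp
  have ev2: "eventually (\<lambda>n. \<forall>x\<in>idx. cmod (h x n) < cmod (lim x) + 1) sequentially"
    using idxf
  proof (rule eventually_ball_finite, intro ballI)
    fix x assume "x \<in> idx"
    show "eventually (\<lambda>n. cmod (h x n) < cmod (lim x) + 1) sequentially"
      using order_tendstoD(2)[OF tendsto_norm[OF hlim[OF \<open>x \<in> idx\<close>]], of "cmod (lim x) + 1"] by simp
  qed
  have "eventually (\<lambda>n. n \<ge> S \<and> L/2 < cmod (\<Sum>x\<in>T0. h x n) \<and> (\<forall>x\<in>idx. cmod (h x n) < cmod (lim x) + 1)) sequentially"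
    using ev1 ev2 eventually_ge_at_top[of S] by eventually_elim auto
  then obtain n0 where n0: "\<And>n. n \<ge> n0 \<Longrightarrow> n \<ge> S \<and> L/2 < cmod (\<Sum>x\<in>T0. h x n) \<and> (\<forall>x\<in>idx. cmod (h x n) < cmod (lim x) + 1)"
    unfolding eventually_sequentially by blast
  define N where "N = d + S + 1 + nat \<lceil>2*M/L\<rceil>"
  have N1: "d + S + 1 \<le> N" unfolding N_def by simp
  have NL: "2*M/L \<le> real N" unfolding N_def by linarith
  from gap have "infinite {m::nat. \<forall>j::int. 1 \<le> \<bar>j\<bar> \<and> \<bar>j\<bar> \<le> int N \<and> int m + j \<ge> 0
              \<longrightarrow> cmod (a m) > real N * cmod (a (nat (int m + j)))}" by blast
  then obtain m where m: "m \<ge> n0 + e" and mG: "\<forall>j::int. 1 \<le> \<bar>j\<bar> \<and> \<bar>j\<bar> \<le> int N \<and> int m + j \<ge> 0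
              \<longrightarrow> cmod (a m) > real N * cmod (a (nat (int m + j)))"
    unfolding infinite_nat_iff_unbounded_le by blast
  define n where "n = m + s0 - e"
  have nge: "n \<ge> n0" and intn: "int n = int m + int s0 - int e" unfolding n_def using m by auto
  note nn = n0[OF nge]
  have am: "cmod (a m) > 0"
  proof -
    have "cmod (a m) > real N * cmod (a (nat (int m + 1)))" using mG[rule_format, of 1] N1 by simp
    moreover have "real N * cmod (a (nat (int m + 1))) \<ge> 0" by simp
    ultimately show ?thesis by linarith
  qed
  have small: "cmod (a (n - snd x + fst x)) \<le> cmod (a m) / real N" if "x \<in> idx - T0" for x
  proof -
    have x: "fst x \<le> d" "snd x \<le> S" "int (fst x) - int (snd x) \<noteq> int e - int s0"
      using that unfolding idx_def T0_def by (auto simp: mem_Times_iff)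
    define j where "j = int (fst x) - int (snd x) - (int e - int s0)"
    have "snd x \<le> n" using x nn by linarith
    hence k: "int (n - snd x + fst x) = int m + j" unfolding j_def using intn by simp
    have "1 \<le> \<bar>j\<bar>" "\<bar>j\<bar> \<le> int N" "int m + j \<ge> 0" using x e N1 k unfolding j_def by auto
    hence "cmod (a m) > real N * cmod (a (nat (int m + j)))" using mG by blast
    moreover have "nat (int m + j) = n - snd x + fst x" using k by (metis nat_int)
    ultimately have "cmod (a m) > real N * cmod (a (n - snd x + fst x))" by simp
    moreover have "real N > 0" using N1 by simp
    ultimately show ?thesis by (simp add: field_simps)
  qed
  have "(\<Sum>x\<in>idx. h x n * a (n - snd x + fst x)) =
        (\<Sum>x\<in>{..d}\<times>{..S}. c (fst x) (snd x) * pochhammer (of_nat (n - snd x + 1)) (fst x) * a (n - snd x + fst x)) / of_nat n ^ e"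
    unfolding h_def idx_def sum_divide_distrib by (intro sum.cong refl) (simp add: field_simps)
  also have "\<dots> = 0" using rel nn by simp
  finally have r0: "(\<Sum>x\<in>idx. h x n * a (n - snd x + fst x)) = 0" .
  have "(\<Sum>x\<in>idx. h x n * a (n - snd x + fst x)) = (\<Sum>x\<in>idx - T0. h x n * a (n - snd x + fst x)) + (\<Sum>x\<in>T0. h x n * a (n - snd x + fst x))"
    using sum.subset_diff[OF T0f(2) idxf] .
  also have "(\<Sum>x\<in>T0. h x n * a (n - snd x + fst x)) = (\<Sum>x\<in>T0. h x n) * a m"
    unfolding sum_distrib_right
  proof (intro sum.cong refl)
    fix x assume xT: "x \<in> T0"
    hence x: "snd x \<le> S" "int (fst x) - int (snd x) = int e - int s0"
      unfolding T0_def idx_def by (auto simp: mem_Times_iff)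
    have "snd x \<le> n" using x nn by linarith
    hence "int (n - snd x + fst x) = int m" using x intn by simp
    hence "n - snd x + fst x = m" by linarith
    thus "h x n * a (n - snd x + fst x) = h x n * a m" by simp
  qed
  finally have "(\<Sum>x\<in>T0. h x n) * a m = - (\<Sum>x\<in>idx - T0. h x n * a (n - snd x + fst x))"
    using r0 by (simp add: eq_neg_iff_add_eq_0 add.commute)
  hence "cmod (\<Sum>x\<in>T0. h x n) * cmod (a m) = cmod (\<Sum>x\<in>idx - T0. h x n * a (n - snd x + fst x))"
    by (metis norm_minus_cancel norm_mult)
  also have "\<dots> \<le> (\<Sum>x\<in>idx - T0. cmod (h x n) * cmod (a (n - snd x + fst x)))"
    by (rule order_trans[OF norm_sum]) (simp add: norm_mult)
  also have "\<dots> \<le> (\<Sum>x\<in>idx - T0. (cmod (lim x) + 1) * (cmod (a m) / real N))"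
  proof (intro sum_mono mult_mono)
    fix x assume "x \<in> idx - T0"
    then show "cmod (h x n) \<le> cmod (lim x) + 1" using nn by auto
    show "cmod (a (n - snd x + fst x)) \<le> cmod (a m) / real N" using small[OF \<open>x \<in> idx - T0\<close>] .
  qed auto
  also have "\<dots> \<le> (\<Sum>x\<in>idx. (cmod (lim x) + 1) * (cmod (a m) / real N))"
    using idxf by (intro sum_mono2) auto
  also have "\<dots> = M * cmod (a m) / real N" unfolding M_def sum_distrib_right by (simp add: sum_divide_distrib)
  finally have ineq: "cmod (\<Sum>x\<in>T0. h x n) * cmod (a m) \<le> M * cmod (a m) / real N" .
  have "L/2 * cmod (a m) < cmod (\<Sum>x\<in>T0. h x n) * cmod (a m)"
    using nn am by (intro mult_strict_right_mono) auto
  with ineq have "L/2 * cmod (a m) < M * cmod (a m) / real N" by linarith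
  hence "L/2 * cmod (a m) < (M / real N) * cmod (a m)" by simp
  hence "L/2 < M / real N" using mult_less_cancel_right_pos[OF am] by blast
  moreover have "real N > 0" using N1 by simp
  ultimately have "L * real N < 2 * M" by (simp add: field_simps)
  moreover have "2 * M \<le> L * real N" using NL Lpos by (simp add: field_simps)
  ultimately show False by linarith
qed


lemma deriv_pow_nth: "(fps_deriv ^^ i) g $ k = pochhammer (of_nat (k+1)) i * g $ (k+i)"
  for g :: "complex fps"
proof (induction i arbitrary: k)
  case 0 then show ?case by simp
next
  case (Suc i)
  have "(fps_deriv ^^ Suc i) g $ k = of_nat (k+1) * ((fps_deriv ^^ i) g $ (k+1))" by simp
  also have "\<dots> = of_nat (k+1) * (pochhammer (of_nat (k+2)) i * g $ (k+1+i))" using Suc by simp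
  also have "\<dots> = pochhammer (of_nat (k+1)) (Suc i) * g $ (k + Suc i)"
    by (simp add: pochhammer_rec algebra_simps)
  finally show ?case .
qed

lemma fls_deriv_pow: "(fls_deriv^^i) (fps_to_fls g) = fps_to_fls ((fps_deriv^^i) g)"
  by (induction i) (auto simp: fls_deriv_fps_to_fls)

lemma fps_to_fls_sum: "fps_to_fls (sum f A) = (\<Sum>x\<in>A. fps_to_fls (f x))"
  by (induction A rule: infinite_finite_induct) auto

lemma not_dfin:
  fixes a :: "nat \<Rightarrow> complex"
  assumes gap: "\<forall>N::nat. infinite {m::nat. \<forall>j::int. 1 \<le> \<bar>j\<bar> \<and> \<bar>j\<bar> \<le> int N \<and> int m + j \<ge> 0
              \<longrightarrow> cmod (a m) > real N * cmod (a (nat (int m + j)))}"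
  shows "\<not> differentially_finite (fps_to_fls (Abs_fps a))"
proof
  assume "differentially_finite (fps_to_fls (Abs_fps a))"
  then obtain d q where q: "\<forall>i\<le>d. q i \<in> rat_funs" "\<exists>i\<le>d. q i \<noteq> 0"
    "(\<Sum>i\<le>d. q i * (fls_deriv ^^ i) (fps_to_fls (Abs_fps a))) = 0"
    unfolding differentially_finite_def by blast
  from clear_denoms[OF q(1)] obtain R p where Rp: "R \<noteq> 0" "\<forall>i\<le>d. E (p i) = E R * q i" by blast
  have nzE: "E R \<noteq> 0" using Rp by (simp add: E_eq0)
  have nzp: "\<exists>i\<le>d. p i \<noteq> 0"
  proof -
    obtain i where i: "i \<le> d" "q i \<noteq> 0" using q(2) by blast
    have "E (p i) \<noteq> 0" using Rp i nzE by simp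
    thus ?thesis using i by (auto simp: E_eq0)
  qed
  define A where "A = Abs_fps a"
  have "(\<Sum>i\<le>d. E (p i) * (fls_deriv ^^ i) (fps_to_fls A)) = E R * (\<Sum>i\<le>d. q i * (fls_deriv ^^ i) (fps_to_fls A))"
    using Rp by (simp add: sum_distrib_left mult.assoc)
  also have "\<dots> = 0" using q(3) unfolding A_def by simp
  finally have "fps_to_fls (\<Sum>i\<le>d. fps_of_poly (p i) * (fps_deriv ^^ i) A) = 0"
    by (simp add: fps_to_fls_sum fls_times_fps_to_fls fls_deriv_pow)
  hence Z: "(\<Sum>i\<le>d. fps_of_poly (p i) * (fps_deriv ^^ i) A) = 0" by simp
  define S where "S = Max ((\<lambda>i. degree (p i)) ` {..d})"
  have degS: "degree (p i) \<le> S" if "i \<le> d" for i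
    unfolding S_def using that by (intro Max_ge) auto
  have rel: "(\<Sum>x\<in>{..d}\<times>{..S}. coeff (p (fst x)) (snd x) *
              pochhammer (of_nat (n - snd x + 1)) (fst x) * a (n - snd x + fst x)) = 0" if nS: "n \<ge> S" for n
  proof -
    have "0 = (\<Sum>i\<le>d. fps_of_poly (p i) * (fps_deriv ^^ i) A) $ n" using Z by simp
    also have "\<dots> = (\<Sum>i\<le>d. \<Sum>s=0..n. coeff (p i) s * ((fps_deriv ^^ i) A $ (n - s)))"
      by (simp add: fps_sum_nth fps_mult_nth)
    also have "\<dots> = (\<Sum>i\<le>d. \<Sum>s\<le>S. coeff (p i) s * (pochhammer (of_nat (n - s + 1)) i * a (n - s + i)))"
    proof (rule sum.cong[OF refl])
      fix i assume i: "i \<in> {..d}"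
      have "(\<Sum>s=0..n. coeff (p i) s * ((fps_deriv ^^ i) A $ (n - s))) = (\<Sum>s\<le>S. coeff (p i) s * ((fps_deriv ^^ i) A $ (n - s)))"
      proof (intro sum.mono_neutral_right)
        show "{..S} \<subseteq> {0..n}" using nS by auto
        show "\<forall>s\<in>{0..n} - {..S}. coeff (p i) s * ((fps_deriv ^^ i) A $ (n - s)) = 0"
          using degS[of i] i by (auto simp: coeff_eq_0)
      qed auto
      also have "\<dots> = (\<Sum>s\<le>S. coeff (p i) s * (pochhammer (of_nat (n - s + 1)) i * a (n - s + i)))"
        unfolding deriv_pow_nth A_def by (intro sum.cong refl) simp
      finally show "(\<Sum>s=0..n. coeff (p i) s * ((fps_deriv ^^ i) A $ (n - s))) =
          (\<Sum>s\<le>S. coeff (p i) s * (pochhammer (of_nat (n - s + 1)) i * a (n - s + i)))" .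
    qed
    also have "\<dots> = (\<Sum>x\<in>{..d}\<times>{..S}. coeff (p (fst x)) (snd x) *
              pochhammer (of_nat (n - snd x + 1)) (fst x) * a (n - snd x + fst x))"
      by (simp add: sum.cartesian_product split_def mult.assoc)
    finally show ?thesis by simp
  qed
  have nz: "\<exists>i\<le>d. \<exists>s\<le>S. coeff (p i) s \<noteq> 0"
  proof -
    obtain i where i: "i \<le> d" "p i \<noteq> 0" using nzp by blast
    thus ?thesis using degS[OF i(1)] by (intro exI[of _ i] conjI exI[of _ "degree (p i)"]) auto
  qed
  show False by (rule key_contra[OF gap rel nz])
qed

theorem proposition6p2:
  fixes a :: "nat \<Rightarrow> complex"
  assumes "\<forall>N::nat. infinite {m::nat. \<forall>j::int. 1 \<le> \<bar>j\<bar> \<and> \<bar>j\<bar> \<le> int N \<and> int m + j \<ge> 0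
              \<longrightarrow> cmod (a m) > real N * cmod (a (nat (int m + j)))}"
  shows "\<not> differentially_finite (fps_to_fls (Abs_fps a)) \<and>
         \<not> algebraic_over_rat_funs (fps_to_fls (Abs_fps a))"
  using not_dfin[OF assms] alg_imp_dfin by blast

end
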